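(* Let $1\leq m\leq n$, let $\Omega$ be a region of $\mathbb{C}$, and let $F:\Omega\to\mathbb{M}_n$ be analytic. Suppose that for each $k=1,\ldots,m$ the function $z\mapsto s_k(F(z))$ attains its maximum value on $\Omega$. Then $s_k(F(z))$ is constant on $\Omega$ for each $k=1,\ldots,m$.
   Context: A region is a nonempty open connected subset of $\mathbb{C}$. $\mathbb{M}_n$ is the set of $n\times n$ complex matrices; $F$ is analytic if each entry is analytic. For $A\in\mathbb{M}_n$, the singular values $s_1(A)\geq\cdots\geq s_n(A)$ are the nonnegative square roots of the eigenvalues of $A^*A$ in nonincreasing order. *)

theory Defs
  imports "HOL-Analysis.Analysis" "HOL-Computational_Algebra.Fundamental_Theorem_Algebra"
begin

definition adjoint_mat :: "complex^'n^'n \<Rightarrow> complex^'n^'n" where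
  "adjoint_mat A = (\<chi> i j. cnj (A $ j $ i))"

definition char_poly_mat :: "complex^'n^'n \<Rightarrow> complex poly" where
  "char_poly_mat A = det (\<chi> i j. (if i = j then [:0, 1:] else 0) - [:A $ i $ j:])"

definition eigenvalues_mset :: "complex^'n^'n \<Rightarrow> complex multiset" where
  "eigenvalues_mset A = proots (char_poly_mat A)"

text \<open>Singular values in nonincreasing order, as a list of length n
  (eigenvalues of A^*A are real and nonnegative).\<close>
definition singular_values :: "complex^'n^'n \<Rightarrow> real list" where
  "singular_values A =
     rev (sorted_list_of_multiset
       (image_mset (\<lambda>z. sqrt (Re z)) (eigenvalues_mset (adjoint_mat A ** A))))"

text \<open>s_k(A), 1-based index k.\<close>
definition sval :: "nat \<Rightarrow> complex^'n^'n \<Rightarrow> real" where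
  "sval k A = singular_values A ! (k - 1)"

end

theory Submission
  imports Defs "HOL-Complex_Analysis.Conformal_Mappings"
begin

definition cinner :: "complex^'n \<Rightarrow> complex^'n \<Rightarrow> complex" where
  "cinner x y = (\<Sum>i\<in>UNIV. x$i * cnj (y$i))"

lemma cinner_add_left: "cinner (x + y) z = cinner x z + cinner y z"
  by (simp add: cinner_def distrib_right sum.distrib)
lemma cinner_diff_left: "cinner (x - y) z = cinner x z - cinner y z"
  by (simp add: cinner_def left_diff_distrib sum_subtractf)
lemma cinner_scale_left: "cinner (c *s x) y = c * cinner x y"
  by (simp add: cinner_def sum_distrib_left mult.assoc)
lemma cinner_sum_left: "cinner (sum f I) y = (\<Sum>i\<in>I. cinner (f i) y)"
proof -
  have "cinner (sum f I) y = (\<Sum>j\<in>UNIV. \<Sum>i\<in>I. f i $ j * cnj (y $ j))"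
    by (simp add: cinner_def sum_component sum_distrib_right)
  also have "\<dots> = (\<Sum>i\<in>I. \<Sum>j\<in>UNIV. f i $ j * cnj (y $ j))" by (rule sum.swap)
  finally show ?thesis by (simp add: cinner_def)
qed
lemma cinner_commute: "cinner y x = cnj (cinner x y)"
  by (simp add: cinner_def mult.commute)
lemma cinner_add_right: "cinner z (x + y) = cinner z x + cinner z y"
  by (simp add: cinner_def distrib_left sum.distrib)
lemma cinner_diff_right: "cinner z (x - y) = cinner z x - cinner z y"
  by (simp add: cinner_def right_diff_distrib sum_subtractf)
lemma cinner_scale_right: "cinner x (c *s y) = cnj c * cinner x y"
  by (simp add: cinner_def sum_distrib_left mult.assoc mult.left_commute)
lemma cinner_sum_right: "cinner y (sum f I) = (\<Sum>i\<in>I. cinner y (f i))"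
  by (subst cinner_commute, simp add: cinner_sum_left) (subst cinner_commute, simp)
lemma cinner_zero_left[simp]: "cinner 0 y = 0" by (simp add: cinner_def)
lemma cinner_zero_right[simp]: "cinner y 0 = 0" by (simp add: cinner_def)

lemma cinner_self: "cinner x x = of_real ((norm x)^2)"
proof -
  have "(norm x)^2 = inner x x" by (simp add: power2_norm_eq_inner)
  also have "\<dots> = (\<Sum>i\<in>UNIV. (cmod (x$i))^2)"
    by (simp add: inner_vec_def power2_norm_eq_inner)
  finally have 1: "(norm x)^2 = (\<Sum>i\<in>UNIV. (cmod (x$i))^2)" .
  have "cinner x x = (\<Sum>i\<in>UNIV. of_real ((cmod (x$i))^2))"
    unfolding cinner_def by (intro sum.cong refl) (metis complex_norm_square)
  then show ?thesis by (simp add: 1 of_real_sum)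
qed

lemma Re_cinner_self: "Re (cinner x x) = (norm x)^2"
  by (simp add: cinner_self)

lemma cinner_self_real: "cinner x x = of_real (Re (cinner x x))"
  by (simp add: cinner_self)

lemma mv_comp: "(A *v x) $ i = (\<Sum>j\<in>UNIV. A$i$j * x$j)"
  by (simp add: matrix_vector_mult_def)

lemma mv_add: "A *v (x + y) = A *v x + A *v y"
  by (simp add: matrix_vector_right_distrib)
lemma mv_diff: "(A::complex^'n^'m) *v (x - y) = A *v x - A *v y"
  by (simp add: vec_eq_iff mv_comp right_diff_distrib sum_subtractf)
lemma mv_scale: "(A::complex^'n^'m) *v (c *s x) = c *s (A *v x)"
  by (simp add: vec_eq_iff mv_comp sum_distrib_left mult.left_commute)
lemma mv_sum: "(A::complex^'n^'m) *v (sum f I) = (\<Sum>i\<in>I. A *v f i)"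
proof -
  have "(A *v (sum f I)) $ a = (\<Sum>i\<in>I. A *v f i) $ a" for a
  proof -
    have "(A *v (sum f I)) $ a = (\<Sum>j\<in>UNIV. \<Sum>i\<in>I. A$a$j * f i $ j)"
      by (simp add: mv_comp sum_component sum_distrib_left)
    also have "\<dots> = (\<Sum>i\<in>I. \<Sum>j\<in>UNIV. A$a$j * f i $ j)" by (rule sum.swap)
    finally show ?thesis by (simp add: mv_comp sum_component)
  qed
  then show ?thesis by (simp add: vec_eq_iff)
qed

lemma cinner_adj: "cinner (adjoint_mat A *v x) y = cinner x (A *v y)"
proof -
  have "cinner (adjoint_mat A *v x) y = (\<Sum>i\<in>UNIV. \<Sum>j\<in>UNIV. cnj (A$j$i) * x$j * cnj (y$i))"
    by (simp add: cinner_def adjoint_mat_def mv_comp sum_distrib_right)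
  also have "\<dots> = (\<Sum>j\<in>UNIV. \<Sum>i\<in>UNIV. cnj (A$j$i) * x$j * cnj (y$i))" by (rule sum.swap)
  also have "\<dots> = cinner x (A *v y)"
    by (simp add: cinner_def mv_comp sum_distrib_left mult_ac)
  finally show ?thesis .
qed

lemma cinner_adjA: "cinner ((adjoint_mat A ** A) *v x) y = cinner (A *v x) (A *v y)"
  by (simp add: matrix_vector_mul_assoc[symmetric] cinner_adj)

lemma cmod_cinner_commute: "cmod (cinner x y) = cmod (cinner y x)"
  by (subst cinner_commute) simp

definition orthonormal_on :: "'i set \<Rightarrow> ('i \<Rightarrow> complex^'n) \<Rightarrow> bool" where
  "orthonormal_on I e \<longleftrightarrow> (\<forall>i\<in>I. \<forall>j\<in>I. cinner (e i) (e j) = (if i = j then 1 else 0))"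

lemma orthonormal_onD: "orthonormal_on I e \<Longrightarrow> i \<in> I \<Longrightarrow> j \<in> I \<Longrightarrow> cinner (e i) (e j) = (if i = j then 1 else 0)"
  by (simp add: orthonormal_on_def)

lemma orthonormal_on_subset: "orthonormal_on I e \<Longrightarrow> J \<subseteq> I \<Longrightarrow> orthonormal_on J e"
  unfolding orthonormal_on_def by blast

lemma orthonormal_norm: "orthonormal_on I e \<Longrightarrow> i \<in> I \<Longrightarrow> norm (e i) = 1"
proof -
  assume "orthonormal_on I e" "i \<in> I"
  then have "cinner (e i) (e i) = 1" by (simp add: orthonormal_on_def)
  then have "(norm (e i))^2 = 1" using Re_cinner_self[of "e i"] by simp
  then have "norm (e i) = 1 \<or> norm (e i) = -1" by (simp add: power2_eq_1_iff)
  then show ?thesis using norm_ge_zero[of "e i"] by linarith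
qed

lemma bessel:
  assumes fin: "finite I" and on: "orthonormal_on I e"
  shows "(\<Sum>i\<in>I. (cmod (cinner x (e i)))^2) \<le> (norm x)^2"
proof -
  define c where "c i = cinner x (e i)" for i
  define p where "p = (\<Sum>i\<in>I. c i *s e i)"
  define T where "T = (\<Sum>i\<in>I. c i * cnj (c i))"
  have T: "T = of_real (\<Sum>i\<in>I. (cmod (c i))^2)"
    unfolding T_def of_real_sum by (intro sum.cong refl) (metis complex_norm_square)
  have cp: "cinner p (e j) = c j" if j: "j \<in> I" for j
  proof -
    have "cinner p (e j) = (\<Sum>i\<in>I. c i * (if i = j then 1 else 0))"
      unfolding p_def cinner_sum_left cinner_scale_left
      using on j by (intro sum.cong refl) (simp add: orthonormal_on_def)
    also have "\<dots> = c j" using fin j by (simp add: if_distrib cong: if_cong)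
    finally show ?thesis .
  qed
  have pp: "cinner p p = T"
    unfolding T_def
    by (subst (2) p_def) (simp add: cinner_sum_right cinner_scale_right cp mult.commute)
  have xp: "cinner x p = T"
    unfolding T_def p_def
    by (simp add: cinner_sum_right cinner_scale_right c_def mult.commute)
  have px: "cinner p x = T"
    using xp T by (subst cinner_commute) simp
  have "cinner (x - p) (x - p) = cinner x x - T"
    by (simp add: cinner_diff_left cinner_diff_right pp xp px)
  then have "Re (cinner (x - p) (x - p)) = (norm x)^2 - (\<Sum>i\<in>I. (cmod (c i))^2)"
    by (simp add: T Re_cinner_self)
  moreover have "Re (cinner (x - p) (x - p)) \<ge> 0" by (simp add: Re_cinner_self)
  ultimately show ?thesis by (simp add: c_def)
qed

lemma exists_orth:
  fixes w :: "nat \<Rightarrow> complex^'n"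
  assumes r: "r < CARD('n)"
  shows "\<exists>x. x \<noteq> 0 \<and> (\<forall>i<r. cinner x (w i) = 0)"
proof (rule ccontr)
  assume nex: "\<not> ?thesis"
  obtain h :: "'n \<Rightarrow> nat" where h: "bij_betw h UNIV {0..<CARD('n)}"
    using ex_bij_betw_finite_nat[of "UNIV :: 'n set"] by auto
  define M :: "complex^'n^'n" where "M = (\<chi> a b. if h a < r then cnj (w (h a) $ b) else 0)"
  have Mv: "(M *v x) $ a = (if h a < r then cinner x (w (h a)) else 0)" for x a
    by (simp add: M_def mv_comp cinner_def mult.commute)
  have "\<forall>x. M *v x = 0 \<longrightarrow> x = 0"
  proof (intro allI impI)
    fix x assume Mx: "M *v x = 0"
    have "cinner x (w i) = 0" if "i < r" for i
    proof -
      have "i \<in> {0..<CARD('n)}" using that r by simp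
      then have "i \<in> h ` UNIV" using h by (simp add: bij_betw_def)
      then obtain a where a: "h a = i" by blast
      have "(M *v x) $ a = 0" using Mx by simp
      then show ?thesis using Mv[of x a] a that by simp
    qed
    then show "x = 0" using nex by blast
  qed
  then obtain B :: "complex^'n^'n" where "B ** M = mat 1"
    using matrix_left_invertible_ker[of M] by blast
  then have MB: "M ** B = mat 1" using matrix_left_right_inverse by blast
  have "r \<in> {0..<CARD('n)}" using r by simp
  then have "r \<in> h ` UNIV" using h by (simp add: bij_betw_def)
  then obtain a where a: "h a = r" by blast
  have "(M ** B) $ a $ a = 0"
    by (simp add: matrix_matrix_mult_def M_def a)
  then show False using MB by (simp add: mat_def)
qed

definition hermitian :: "complex^'n^'n \<Rightarrow> bool" where
  "hermitian H \<longleftrightarrow> (\<forall>x y. cinner (H *v x) y = cinner x (H *v y))"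

lemma hermitian_AA: "hermitian (adjoint_mat A ** A)"
  unfolding hermitian_def
proof (intro allI)
  fix x y
  have "cinner x ((adjoint_mat A ** A) *v y) = cnj (cinner ((adjoint_mat A ** A) *v y) x)"
    by (rule cinner_commute)
  also have "\<dots> = cnj (cinner (A *v y) (A *v x))" by (simp add: cinner_adjA)
  also have "\<dots> = cinner (A *v x) (A *v y)" by (subst cinner_commute[of "A *v x"]) simp
  finally show "cinner ((adjoint_mat A ** A) *v x) y = cinner x ((adjoint_mat A ** A) *v y)"
    by (simp add: cinner_adjA)
qed

lemma scaleR_vec: "a *\<^sub>R (x::complex^'n) = of_real a *s x"
  by (simp add: vec_eq_iff) (simp add: scaleR_conv_of_real)

lemma cont_cinner: "continuous_on S (\<lambda>x::complex^'n. cinner x z)"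
  unfolding cinner_def by (intro continuous_intros)

lemma cont_quad: "continuous_on S (\<lambda>y::complex^'n. Re (cinner (H *v y) y))"
  unfolding cinner_def mv_comp by (intro continuous_intros)

lemma Re_quad_scale: "Re (cinner (H *v (of_real a *s x)) (of_real a *s x)) = a^2 * Re (cinner (H *v x) x)"
  by (simp add: mv_scale cinner_scale_left cinner_scale_right power2_eq_square)

lemma spectral_step:
  fixes H :: "complex^'n^'n" and w :: "nat \<Rightarrow> complex^'n"
  assumes herm: "hermitian H" and r: "r < CARD('n)" and on: "orthonormal_on {..<r} w"
    and ev: "\<forall>i<r. H *v w i = of_real (\<mu> i) *s w i"
  shows "\<exists>x lam. norm x = 1 \<and> (\<forall>i<r. cinner x (w i) = 0) \<and> H *v x = of_real lam *s x \<and>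
      (\<forall>y. norm y = 1 \<and> (\<forall>i<r. cinner y (w i) = 0) \<longrightarrow> Re (cinner (H *v y) y) \<le> lam)"
proof -
  define V where "V = {x. \<forall>i<r. cinner x (w i) = 0}"
  define S where "S = V \<inter> sphere 0 1"
  define f where "f y = Re (cinner (H *v y) y)" for y
  have "V = (\<Inter>i\<in>{..<r}. {x. cinner x (w i) = 0})" by (auto simp: V_def)
  moreover have "closed {x. cinner x (w i) = 0}" for i
    by (rule closed_Collect_eq) (auto intro: cont_cinner)
  ultimately have "closed V" by auto
  then have cS: "compact S" unfolding S_def by (intro closed_Int_compact compact_sphere)
  obtain x1 where x1: "x1 \<noteq> 0" "\<forall>i<r. cinner x1 (w i) = 0" using exists_orth[OF r] by blast
  define x2 where "x2 = (1 / norm x1) *\<^sub>R x1"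
  have "norm x2 = 1" using x1 by (simp add: x2_def)
  moreover have "x2 \<in> V" using x1 unfolding V_def x2_def
    by (auto simp: scaleR_vec cinner_scale_left)
  ultimately have "x2 \<in> S" unfolding S_def by simp
  then have neS: "S \<noteq> {}" by blast
  have contf: "continuous_on S f" unfolding f_def by (rule cont_quad)
  obtain x0 where x0: "x0 \<in> S" and x0max: "\<forall>y\<in>S. f y \<le> f x0"
    using continuous_attains_sup[OF cS neS contf] by blast
  define lam where "lam = f x0"
  have nx0: "norm x0 = 1" and Vx0: "\<forall>i<r. cinner x0 (w i) = 0"
    using x0 by (auto simp: S_def V_def)
  have c00: "cinner x0 x0 = 1" using nx0 by (simp add: cinner_self)
  have cj: "cnj (cinner (H *v x0) x0) = cinner (H *v x0) x0"
    using herm unfolding hermitian_def by (metis cinner_commute)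
  have "Im (cinner (H *v x0) x0) = 0"
    using arg_cong[OF cj, of Im] by simp
  then have hreal: "cinner (H *v x0) x0 = of_real lam"
    unfolding lam_def f_def by (simp add: complex_eq_iff)
  define y where "y = H *v x0 - of_real lam *s x0"
  have Vy: "cinner y (w i) = 0" if i: "i < r" for i
  proof -
    have "cinner (H *v x0) (w i) = cinner x0 (H *v w i)"
      using herm unfolding hermitian_def by blast
    also have "\<dots> = 0" using ev i Vx0 by (simp add: cinner_scale_right)
    finally show ?thesis unfolding y_def using Vx0 i
      by (simp add: cinner_diff_left cinner_scale_left)
  qed
  have yx0: "cinner y x0 = 0"
    unfolding y_def by (simp add: cinner_diff_left cinner_scale_left hreal c00)
  have x0y: "cinner x0 y = 0" using yx0 by (subst cinner_commute) simp
  define N where "N = (norm y)^2"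
  have N0: "N \<ge> 0" by (simp add: N_def)
  have Hx0: "H *v x0 = y + of_real lam *s x0" by (simp add: y_def)
  have Hx0y: "cinner (H *v x0) y = of_real N"
    unfolding Hx0 by (simp add: cinner_add_left cinner_scale_left x0y cinner_self N_def)
  have Hyx0: "cinner (H *v y) x0 = of_real N"
  proof -
    have "cinner (H *v y) x0 = cinner y (H *v x0)" using herm unfolding hermitian_def by blast
    also have "\<dots> = cnj (cinner (H *v x0) y)" by (rule cinner_commute)
    finally show ?thesis using Hx0y by simp
  qed
  define K where "K = Re (cinner (H *v y) y)"
  have key: "2 * N \<le> t * (lam * N - K)" if t: "t > 0" for t
  proof -
    define xt where "xt = x0 + of_real t *s y"
    have Vxt: "\<forall>i<r. cinner xt (w i) = 0"
      using Vx0 Vy by (simp add: xt_def cinner_add_left cinner_scale_left)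
    have cyy: "cinner y y = of_real N" by (simp add: N_def cinner_self)
    have "cinner xt xt = of_real (1 + t^2 * N)"
      unfolding xt_def by (simp add: cinner_add_left cinner_add_right cinner_scale_left cinner_scale_right
          c00 yx0 x0y cyy power2_eq_square)
    then have nx: "(norm xt)^2 = 1 + t^2 * N" using Re_cinner_self[of xt] by simp
    have fxt: "f xt = lam + 2 * t * N + t^2 * K"
      by (simp add: f_def xt_def mv_add mv_scale cinner_add_left cinner_add_right cinner_scale_left
          cinner_scale_right hreal Hx0y Hyx0 K_def power2_eq_square algebra_simps)
    have pos: "1 + t^2 * N > 0" using N0 by (simp add: add_pos_nonneg)
    then have xt0: "norm xt > 0" using nx by (metis norm_ge_zero order_le_less power_zero_numeral zero_less_power2 less_numeral_extra(3))
    define z where "z = (1 / norm xt) *\<^sub>R xt"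
    have nz: "norm z = 1" using xt0 by (simp add: z_def)
    have "z \<in> V" using Vxt unfolding V_def z_def
      by (simp add: scaleR_vec cinner_scale_left)
    then have "z \<in> S" using nz unfolding S_def by simp
    then have "f z \<le> lam" using x0max lam_def by blast
    moreover have "f z = (1 / norm xt)^2 * f xt"
      unfolding z_def f_def scaleR_vec by (rule Re_quad_scale)
    ultimately have "f xt / (norm xt)^2 \<le> lam" by (simp add: power_divide)
    then have "f xt \<le> lam * (1 + t^2 * N)" using pos nx by (simp add: divide_le_eq)
    then have "2 * t * N \<le> t * (t * (lam * N - K))" unfolding fxt by (simp add: algebra_simps power2_eq_square)
    then show ?thesis using t by (simp add: mult_le_cancel_left_pos)
  qed
  have "N = 0"
  proof (rule ccontr)
    assume "N \<noteq> 0"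
    then have Np: "N > 0" using N0 by simp
    define D where "D = \<bar>lam * N - K\<bar> + 1"
    have Dp: "D > 0" by (simp add: D_def add_pos_nonneg)
    have "2 * N \<le> (N / D) * (lam * N - K)" using key[of "N / D"] Np Dp by simp
    also have "\<dots> \<le> (N / D) * \<bar>lam * N - K\<bar>" using Np Dp by (intro mult_left_mono) auto
    also have "\<dots> < N / D * D" using Np Dp by (intro mult_strict_left_mono) (auto simp: D_def)
    also have "\<dots> = N" using Dp by simp
    finally show False using Np by simp
  qed
  then have "y = 0" by (simp add: N_def)
  then have "H *v x0 = of_real lam *s x0" by (simp add: y_def)
  moreover have "\<forall>y. norm y = 1 \<and> (\<forall>i<r. cinner y (w i) = 0) \<longrightarrow> Re (cinner (H *v y) y) \<le> lam"
    using x0max unfolding lam_def f_def S_def V_def by auto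
  ultimately show ?thesis using nx0 Vx0 by blast
qed

lemma spectral_aux:
  fixes H :: "complex^'n^'n"
  assumes herm: "hermitian H"
  shows "r \<le> CARD('n) \<Longrightarrow> \<exists>w \<mu>. orthonormal_on {..<r} w \<and> (\<forall>i<r. H *v w i = of_real (\<mu> i) *s w i) \<and>
     (\<forall>i<r. \<forall>y. norm y = 1 \<and> (\<forall>j<i. cinner y (w j) = 0) \<longrightarrow> Re (cinner (H *v y) y) \<le> \<mu> i)"
proof (induction r)
  case 0 then show ?case by (auto simp: orthonormal_on_def)
next
  case (Suc r)
  then obtain w \<mu> where on: "orthonormal_on {..<r} w" and ev: "\<forall>i<r. H *v w i = of_real (\<mu> i) *s w i"
    and mx: "\<forall>i<r. \<forall>y. norm y = 1 \<and> (\<forall>j<i. cinner y (w j) = 0) \<longrightarrow> Re (cinner (H *v y) y) \<le> \<mu> i"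
    by auto
  from Suc.prems have r: "r < CARD('n)" by simp
  obtain x lam where nx: "norm x = 1" and xo: "\<forall>i<r. cinner x (w i) = 0" and xe: "H *v x = of_real lam *s x"
    and xm: "\<forall>y. norm y = 1 \<and> (\<forall>i<r. cinner y (w i) = 0) \<longrightarrow> Re (cinner (H *v y) y) \<le> lam"
    using spectral_step[OF herm r on ev] by blast
  define w' where "w' = w(r := x)"
  define \<mu>' where "\<mu>' = \<mu>(r := lam)"
  have cxx: "cinner x x = 1" using nx by (simp add: cinner_self)
  have "orthonormal_on {..<Suc r} w'"
    unfolding orthonormal_on_def
  proof (intro ballI)
    fix i j assume i: "i \<in> {..<Suc r}" and j: "j \<in> {..<Suc r}"
    show "cinner (w' i) (w' j) = (if i = j then 1 else 0)"
    proof (cases "i = r")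
      case True
      show ?thesis
      proof (cases "j = r")
        case True then show ?thesis using \<open>i = r\<close> by (simp add: w'_def cxx)
      next
        case False then have "j < r" using j by simp
        then show ?thesis using \<open>i = r\<close> False xo by (simp add: w'_def)
      qed
    next
      case False
      then have ir: "i < r" using i by simp
      show ?thesis
      proof (cases "j = r")
        case True
        have "cinner (w i) x = cnj (cinner x (w i))" by (rule cinner_commute)
        then show ?thesis using True False ir xo by (simp add: w'_def)
      next
        case False then have "j < r" using j by simp
        then show ?thesis using \<open>i \<noteq> r\<close> False ir on by (simp add: w'_def orthonormal_on_def)
      qed
    qed
  qed
  moreover have "\<forall>i<Suc r. H *v w' i = of_real (\<mu>' i) *s w' i"
    using ev xe by (auto simp: w'_def \<mu>'_def less_Suc_eq)
  moreover have "\<forall>i<Suc r. \<forall>y. norm y = 1 \<and> (\<forall>j<i. cinner y (w' j) = 0) \<longrightarrow> Re (cinner (H *v y) y) \<le> \<mu>' i"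
  proof (intro allI impI)
    fix i y assume i: "i < Suc r" and y: "norm y = 1 \<and> (\<forall>j<i. cinner y (w' j) = 0)"
    show "Re (cinner (H *v y) y) \<le> \<mu>' i"
    proof (cases "i = r")
      case True
      then have "\<forall>j<r. cinner y (w j) = 0" using y by (simp add: w'_def)
      then show ?thesis using xm y True by (simp add: \<mu>'_def)
    next
      case False
      then have ir: "i < r" using i by simp
      then have "\<forall>j<i. cinner y (w j) = 0" using y by (simp add: w'_def)
      then show ?thesis using mx y ir False by (simp add: \<mu>'_def)
    qed
  qed
  ultimately show ?case by blast
qed

lemma spectral:
  fixes H :: "complex^'n^'n"
  assumes herm: "hermitian H"
  obtains w \<mu> where "orthonormal_on {..<CARD('n)} w" "\<forall>i<CARD('n). H *v w i = of_real (\<mu> i) *s w i"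
    "\<forall>i j. i \<le> j \<and> j < CARD('n) \<longrightarrow> \<mu> j \<le> \<mu> i"
proof -
  obtain w \<mu> where on: "orthonormal_on {..<CARD('n)} w" and ev: "\<forall>i<CARD('n). H *v w i = of_real (\<mu> i) *s w i"
    and mx: "\<forall>i<CARD('n). \<forall>y. norm y = 1 \<and> (\<forall>j<i. cinner y (w j) = 0) \<longrightarrow> Re (cinner (H *v y) y) \<le> \<mu> i"
    using spectral_aux[OF herm order_refl] by blast
  have "\<mu> j \<le> \<mu> i" if ij: "i \<le> j" "j < CARD('n)" for i j
  proof -
    have cjj: "cinner (w j) (w j) = 1" using on ij by (simp add: orthonormal_on_def)
    have "Re (cinner (H *v w j) (w j)) = \<mu> j" using ev ij by (simp add: cinner_scale_left cjj)
    moreover have "norm (w j) = 1" using orthonormal_norm[OF on] ij by simp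
    moreover have "\<forall>k<i. cinner (w j) (w k) = 0" using on ij by (auto simp: orthonormal_on_def)
    ultimately show ?thesis using mx ij by (metis le_less_trans)
  qed
  then show ?thesis using that on ev by blast
qed

lemma complete:
  fixes w :: "nat \<Rightarrow> complex^'n"
  assumes on: "orthonormal_on {..<CARD('n)} w"
  shows "(\<Sum>l<CARD('n). w l $ a * cnj (w l $ b)) = (if a = b then 1 else 0)"
proof -
  obtain h :: "'n \<Rightarrow> nat" where h: "bij_betw h UNIV {0..<CARD('n)}"
    using ex_bij_betw_finite_nat[of "UNIV :: 'n set"] by auto
  have hr: "h a < CARD('n)" for a using h by (auto simp: bij_betw_def)
  have hinj: "h a = h b \<longleftrightarrow> a = b" for a b using h by (auto simp: bij_betw_def inj_def)
  define M :: "complex^'n^'n" where "M = (\<chi> a b. cnj (w (h a) $ b))"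
  have "(M ** adjoint_mat M) $ a $ b = (mat 1 :: complex^'n^'n) $ a $ b" for a b
  proof -
    have "(M ** adjoint_mat M) $ a $ b = cinner (w (h b)) (w (h a))"
      by (simp add: matrix_matrix_mult_def M_def adjoint_mat_def cinner_def mult.commute)
    also have "\<dots> = (if a = b then 1 else 0)"
      using orthonormal_onD[OF on, of "h b" "h a"] hr hinj by auto
    finally show ?thesis by (simp add: mat_def)
  qed
  then have "M ** adjoint_mat M = mat 1" by (simp add: vec_eq_iff)
  then have MM: "adjoint_mat M ** M = mat 1" using matrix_left_right_inverse by blast
  have "(adjoint_mat M ** M) $ a $ b = (\<Sum>c\<in>UNIV. w (h c) $ a * cnj (w (h c) $ b))"
    by (simp add: matrix_matrix_mult_def M_def adjoint_mat_def)
  also have "\<dots> = (\<Sum>l\<in>{0..<CARD('n)}. w l $ a * cnj (w l $ b))"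
    using sum.reindex_bij_betw[OF h, of "\<lambda>l. w l $ a * cnj (w l $ b)"] by simp
  finally show ?thesis using MM by (simp add: mat_def lessThan_atLeast0)
qed

lemma expand:
  fixes w :: "nat \<Rightarrow> complex^'n"
  assumes on: "orthonormal_on {..<CARD('n)} w"
  shows "x = (\<Sum>l<CARD('n). cinner x (w l) *s w l)"
proof -
  have "(\<Sum>l<CARD('n). cinner x (w l) *s w l) $ a = x $ a" for a
  proof -
    have "(\<Sum>l<CARD('n). cinner x (w l) *s w l) $ a = (\<Sum>l<CARD('n). \<Sum>b\<in>UNIV. x$b * (w l $ a * cnj (w l $ b)))"
      by (simp add: sum_component cinner_def sum_distrib_left sum_distrib_right mult_ac)
    also have "\<dots> = (\<Sum>b\<in>UNIV. \<Sum>l<CARD('n). x$b * (w l $ a * cnj (w l $ b)))"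
      by (rule sum.swap)
    also have "\<dots> = (\<Sum>b\<in>UNIV. x$b * (if a = b then 1 else 0))"
      by (simp add: sum_distrib_left[symmetric] complete[OF on])
    also have "\<dots> = (\<Sum>b\<in>UNIV. if b = a then x$b else 0)"
      by (intro sum.cong) auto
    also have "\<dots> = x $ a" by simp
    finally show ?thesis .
  qed
  then show ?thesis by (simp add: vec_eq_iff)
qed

lemma H_entries:
  fixes H :: "complex^'n^'n"
  assumes on: "orthonormal_on {..<CARD('n)} w" and ev: "\<forall>i<CARD('n). H *v w i = of_real (\<mu> i) *s w i"
  shows "H $ i $ j = (\<Sum>l<CARD('n). w l $ i * of_real (\<mu> l) * cnj (w l $ j))"
proof -
  have "(H *v axis j 1) $ i = H $ i $ j"
    unfolding mv_comp axis_def
    by (auto simp: if_distrib if_distribR sum.delta'[OF finite] cong: if_cong)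
  moreover have "cinner (axis j 1) (w l) = cnj (w l $ j)" for l
    unfolding cinner_def axis_def
    by (auto simp: if_distrib if_distribR sum.delta'[OF finite] cong: if_cong)
  moreover have "H *v axis j 1 = (\<Sum>l<CARD('n). cnj (w l $ j) *s (of_real (\<mu> l) *s w l))"
    by (subst expand[OF on, of "axis j 1"]) (simp add: mv_sum mv_scale ev calculation(2))
  ultimately show ?thesis by (simp add: sum_component mult_ac)
qed

definition cpm :: "complex^'n^'m \<Rightarrow> complex poly^'n^'m" where
  "cpm A = (\<chi> i j. [:A$i$j:])"

lemma pCons_add: "[:a + b:] = [:a:] + [:b:]"
  by (simp only: add_pCons add_0_right)

lemma pCons_sum: "[:sum f S:] = (\<Sum>x\<in>S. [:f x:])"
proof (induction S rule: infinite_finite_induct)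
  case (insert x F)
  have "[:sum f (insert x F):] = [:f x:] + [:sum f F:]" using insert by (simp add: pCons_add)
  then show ?case using insert by simp
qed auto

lemma cpm_mult: "cpm (A ** B) = cpm A ** cpm B"
  by (simp add: cpm_def matrix_matrix_mult_def vec_eq_iff pCons_sum mult.commute)

lemma cpm_one: "cpm (mat 1 :: complex^'n^'n) = mat 1"
  by (simp add: cpm_def mat_def vec_eq_iff one_pCons)

lemma mat_comm: "(A::'a::comm_ring_1^'n^'n) ** mat c = mat c ** A"
  unfolding matrix_matrix_mult_def mat_def
  by (auto simp: if_distrib if_distribR sum.delta'[OF finite] sum.delta[OF finite] mult.commute vec_eq_iff cong: if_cong)

lemma mat_sub_ldistrib: "(A::'a::comm_ring_1^'n^'n) ** (B - C) = A ** B - A ** C"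
  by (simp add: matrix_matrix_mult_def vec_eq_iff right_diff_distrib sum_subtractf)
lemma mat_sub_rdistrib: "((B - C) ** (A::'a::comm_ring_1^'n^'n)) = B ** A - C ** A"
  by (simp add: matrix_matrix_mult_def vec_eq_iff left_diff_distrib sum_subtractf)

lemma char_poly_decomp:
  fixes H W D :: "complex^'n^'n"
  assumes WW: "W ** adjoint_mat W = mat 1" and H: "H = W ** D ** adjoint_mat W"
    and D: "\<And>a b. a \<noteq> b \<Longrightarrow> D$a$b = 0"
  shows "char_poly_mat H = (\<Prod>a\<in>UNIV. [:- D$a$a, 1:])"
proof -
  define P where "P = cpm W"
  define Q where "Q = cpm (adjoint_mat W)"
  define X :: "complex poly^'n^'n" where "X = mat [:0,1:]"
  have PQ: "P ** Q = mat 1" unfolding P_def Q_def using WW cpm_mult cpm_one by metis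
  have cH: "cpm H = P ** cpm D ** Q" unfolding P_def Q_def H by (simp add: cpm_mult)
  have "(\<chi> i j. (if i = j then [:0, 1:] else 0) - [:H $ i $ j:]) = X - cpm H"
    by (simp add: vec_eq_iff cpm_def mat_def X_def)
  also have "X = P ** X ** Q"
    by (metis PQ X_def mat_comm matrix_mul_assoc matrix_mul_lid matrix_mul_rid)
  also have "P ** X ** Q - cpm H = P ** (X - cpm D) ** Q"
    by (simp add: cH mat_sub_ldistrib mat_sub_rdistrib)
  finally have cp: "char_poly_mat H = det (P ** (X - cpm D) ** Q)"
    by (simp add: char_poly_mat_def)
  have "det (P ** (X - cpm D) ** Q) = det (X - cpm D) * (det P * det Q)"
    by (simp add: det_mul mult_ac)
  also have "det P * det Q = 1" using PQ det_mul det_I by metis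
  also have "det (X - cpm D) = (\<Prod>a\<in>UNIV. (X - cpm D)$a$a)"
    by (rule det_diagonal) (simp add: X_def cpm_def mat_def D)
  finally show ?thesis using cp by (simp add: X_def cpm_def mat_def)
qed

lemma sum_single_mset: "(\<Sum>l\<in>{0..<n}. {#f l#}) = mset (map f [0..<n])"
  by (induction n) auto

lemma sv_decomp:
  fixes A :: "complex^'n^'n"
  obtains w \<mu> where "orthonormal_on {..<CARD('n)} w"
    "\<forall>l<CARD('n). (adjoint_mat A ** A) *v w l = of_real (\<mu> l) *s w l"
    "\<forall>i j. i \<le> j \<and> j < CARD('n) \<longrightarrow> \<mu> j \<le> \<mu> i"
    "\<forall>l<CARD('n). 0 \<le> \<mu> l"
    "\<forall>l<CARD('n). singular_values A ! l = sqrt (\<mu> l)"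
proof -
  let ?H = "adjoint_mat A ** A"
  let ?n = "CARD('n)"
  obtain w \<mu> where on: "orthonormal_on {..<?n} w" and ev: "\<forall>l<?n. ?H *v w l = of_real (\<mu> l) *s w l"
    and dec: "\<forall>i j. i \<le> j \<and> j < ?n \<longrightarrow> \<mu> j \<le> \<mu> i"
    using spectral[OF hermitian_AA] by blast
  have pos: "\<forall>l<?n. 0 \<le> \<mu> l"
  proof (intro allI impI)
    fix l assume l: "l < ?n"
    have "cinner (?H *v w l) (w l) = of_real (\<mu> l)"
      using ev l orthonormal_onD[OF on, of l l] by (simp add: cinner_scale_left)
    moreover have "cinner (?H *v w l) (w l) = of_real ((norm (A *v w l))^2)"
      by (simp add: cinner_adjA cinner_self)
    ultimately have "\<mu> l = (norm (A *v w l))^2" by (metis of_real_eq_iff of_real_power)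
    then show "0 \<le> \<mu> l" by simp
  qed
  obtain h :: "'n \<Rightarrow> nat" where h: "bij_betw h UNIV {0..<CARD('n)}"
    using ex_bij_betw_finite_nat[of "UNIV :: 'n set"] by auto
  define W :: "complex^'n^'n" where "W = (\<chi> i a. w (h a) $ i)"
  define D :: "complex^'n^'n" where "D = (\<chi> a b. if a = b then of_real (\<mu> (h a)) else 0)"
  have reidx: "(\<Sum>a\<in>UNIV. g (h a)) = (\<Sum>l<?n. g l)" for g :: "nat \<Rightarrow> complex"
    using sum.reindex_bij_betw[OF h, of g] by (simp add: lessThan_atLeast0)
  have WW: "W ** adjoint_mat W = mat 1"
  proof -
    have "(W ** adjoint_mat W) $ i $ j = (mat 1 :: complex^'n^'n) $ i $ j" for i j
    proof -
      have "(W ** adjoint_mat W) $ i $ j = (\<Sum>a\<in>UNIV. w (h a) $ i * cnj (w (h a) $ j))"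
        by (simp add: W_def adjoint_mat_def matrix_matrix_mult_def)
      also have "\<dots> = (if i = j then 1 else 0)"
        using reidx[of "\<lambda>l. w l $ i * cnj (w l $ j)"] complete[OF on, of i j] by simp
      finally show ?thesis by (simp add: mat_def)
    qed
    then show ?thesis by (simp add: vec_eq_iff)
  qed
  have WD: "(W ** D) $ i $ b = w (h b) $ i * of_real (\<mu> (h b))" for i b
    unfolding matrix_matrix_mult_def W_def D_def
    by (auto simp: if_distrib if_distribR sum.delta'[OF finite] sum.delta[OF finite] cong: if_cong)
  have HW: "?H = W ** D ** adjoint_mat W"
  proof -
    have "(W ** D ** adjoint_mat W) $ i $ j = ?H $ i $ j" for i j
    proof -
      have "(W ** D ** adjoint_mat W) $ i $ j = (\<Sum>b\<in>UNIV. w (h b) $ i * of_real (\<mu> (h b)) * cnj (w (h b) $ j))"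
        unfolding matrix_matrix_mult_def[of "W ** D"] by (simp add: WD adjoint_mat_def, simp add: W_def)
      also have "\<dots> = (\<Sum>l<?n. w l $ i * of_real (\<mu> l) * cnj (w l $ j))" by (rule reidx)
      also have "\<dots> = ?H $ i $ j" using H_entries[OF on ev] by simp
      finally show ?thesis .
    qed
    then show ?thesis by (simp add: vec_eq_iff)
  qed
  have Ddiag: "\<And>a b. a \<noteq> b \<Longrightarrow> D$a$b = 0" by (simp add: D_def)
  have "char_poly_mat ?H = (\<Prod>a\<in>UNIV. [:- D$a$a, 1:])" by (rule char_poly_decomp[OF WW HW Ddiag])
  also have "\<dots> = (\<Prod>l\<in>{0..<?n}. [:- of_real (\<mu> l), 1:])"
    using prod.reindex_bij_betw[OF h, of "\<lambda>l. [:- of_real (\<mu> l), 1:]"] by (simp add: D_def)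
  finally have cp2: "char_poly_mat ?H = (\<Prod>l\<in>{0..<?n}. [:- of_real (\<mu> l), 1:])" .
  have ev_mset: "eigenvalues_mset ?H = mset (map (\<lambda>l. complex_of_real (\<mu> l)) [0..<?n])"
    unfolding eigenvalues_mset_def cp2
    by (subst proots_prod) (auto simp: sum_single_mset)
  define L where "L = map (\<lambda>l. sqrt (\<mu> l)) [0..<?n]"
  have im: "image_mset (\<lambda>z. sqrt (Re z)) (eigenvalues_mset ?H) = mset L"
    by (simp add: ev_mset L_def multiset.map_comp o_def)
  have sortedrev: "sorted (rev L)"
    unfolding sorted_iff_nth_mono
  proof (intro allI impI)
    fix i j assume ij: "i \<le> j" "j < length (rev L)"
    then have "?n - Suc j \<le> ?n - Suc i" "?n - Suc i < ?n" by (auto simp: L_def)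
    then have "\<mu> (?n - Suc i) \<le> \<mu> (?n - Suc j)" using dec by blast
    then show "rev L ! i \<le> rev L ! j" using ij by (simp add: rev_nth L_def)
  qed
  have "sort L = rev L" by (rule properties_for_sort) (simp_all add: sortedrev)
  then have "singular_values A = L"
    unfolding singular_values_def im by simp
  then have "\<forall>l<?n. singular_values A ! l = sqrt (\<mu> l)" by (simp add: L_def)
  then show thesis using that on ev dec pos by blast
qed

lemma rearr:
  fixes s t :: "nat \<Rightarrow> real"
  assumes k: "1 \<le> k" "k \<le> n"
    and dec: "\<forall>i j. i \<le> j \<and> j < n \<longrightarrow> s j \<le> s i" and s0: "\<forall>l<n. 0 \<le> s l"
    and t01: "\<forall>l<n. 0 \<le> t l \<and> t l \<le> 1" and tsum: "(\<Sum>l<n. t l) \<le> real k"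
  shows "(\<Sum>l<n. s l * t l) \<le> (\<Sum>l<k. s l)"
proof -
  define c where "c = s (k - 1)"
  have c0: "0 \<le> c" using s0 k by (simp add: c_def)
  have un: "{..<n} = {..<k} \<union> {k..<n}" using k by auto
  have dj: "{..<k} \<inter> {k..<n} = {}" by auto
  have split: "(\<Sum>l<n. f l) = (\<Sum>l<k. f l) + (\<Sum>l\<in>{k..<n}. f l)" for f :: "nat \<Rightarrow> real"
    by (subst un) (rule sum.union_disjoint, auto)
  have 1: "(\<Sum>l\<in>{k..<n}. s l * t l) \<le> (\<Sum>l\<in>{k..<n}. c * t l)"
  proof (rule sum_mono)
    fix l assume l: "l \<in> {k..<n}"
    then have "k - 1 \<le> l \<and> l < n" using k by auto
    then have "s l \<le> c" using dec unfolding c_def by blast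
    then show "s l * t l \<le> c * t l" using t01 l by (intro mult_right_mono) auto
  qed
  have 2: "(\<Sum>l<k. c * (1 - t l)) \<le> (\<Sum>l<k. s l * (1 - t l))"
  proof (rule sum_mono)
    fix l assume l: "l \<in> {..<k}"
    then have "l \<le> k - 1 \<and> k - 1 < n" using k by auto
    then have "c \<le> s l" using dec unfolding c_def by blast
    then show "c * (1 - t l) \<le> s l * (1 - t l)" using t01 l k by (intro mult_right_mono) auto
  qed
  have 3: "(\<Sum>l<k. c * (1 - t l)) = c * (real k - (\<Sum>l<k. t l))"
    by (simp add: sum_distrib_left[symmetric] sum_subtractf)
  have 4: "(\<Sum>l\<in>{k..<n}. c * t l) = c * (\<Sum>l\<in>{k..<n}. t l)" by (simp add: sum_distrib_left)
  have 5: "(\<Sum>l\<in>{k..<n}. t l) \<le> real k - (\<Sum>l<k. t l)" using tsum split[of t] by simp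
  have 6: "(\<Sum>l<k. s l * (1 - t l)) = (\<Sum>l<k. s l) - (\<Sum>l<k. s l * t l)"
    by (simp add: right_diff_distrib sum_subtractf)
  have "(\<Sum>l<n. s l * t l) = (\<Sum>l<k. s l * t l) + (\<Sum>l\<in>{k..<n}. s l * t l)" by (rule split)
  also have "\<dots> \<le> (\<Sum>l<k. s l * t l) + c * (real k - (\<Sum>l<k. t l))"
    using 1 4 5 c0 by (smt (verit) mult_left_mono)
  also have "\<dots> \<le> (\<Sum>l<k. s l)" using 2 3 6 by simp
  finally show ?thesis .
qed

lemma Aw_inner:
  fixes A :: "complex^'n^'n"
  assumes on: "orthonormal_on {..<CARD('n)} w"
    and ev: "\<forall>l<CARD('n). (adjoint_mat A ** A) *v w l = of_real (\<mu> l) *s w l"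
    and l: "l < CARD('n)" and m: "m < CARD('n)"
  shows "cinner (A *v w l) (A *v w m) = (if l = m then of_real (\<mu> l) else 0)"
proof -
  have "cinner (A *v w l) (A *v w m) = cinner ((adjoint_mat A ** A) *v w l) (w m)"
    by (simp add: cinner_adjA)
  also have "\<dots> = of_real (\<mu> l) * cinner (w l) (w m)" using ev l by (simp add: cinner_scale_left)
  finally show ?thesis using orthonormal_onD[OF on, of l m] l m by simp
qed

lemma orth_y:
  fixes A :: "complex^'n^'n"
  assumes on: "orthonormal_on {..<CARD('n)} w"
    and ev: "\<forall>l<CARD('n). (adjoint_mat A ** A) *v w l = of_real (\<mu> l) *s w l"
  shows "orthonormal_on {l. l < CARD('n) \<and> 0 < \<mu> l} (\<lambda>l. of_real (1 / sqrt (\<mu> l)) *s (A *v w l))"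
  unfolding orthonormal_on_def
proof (intro ballI)
  fix l m assume l: "l \<in> {l. l < CARD('n) \<and> 0 < \<mu> l}" and m: "m \<in> {l. l < CARD('n) \<and> 0 < \<mu> l}"
  have "cinner (of_real (1 / sqrt (\<mu> l)) *s (A *v w l)) (of_real (1 / sqrt (\<mu> m)) *s (A *v w m))
     = of_real (1 / sqrt (\<mu> l)) * of_real (1 / sqrt (\<mu> m)) * cinner (A *v w l) (A *v w m)"
    by (simp add: cinner_scale_left cinner_scale_right)
  also have "\<dots> = (if l = m then 1 else 0)"
    using Aw_inner[OF on ev, of l m] l m
    by (auto simp: of_real_mult[symmetric] simp del: of_real_mult)
  finally show "cinner (of_real (1 / sqrt (\<mu> l)) *s (A *v w l)) (of_real (1 / sqrt (\<mu> m)) *s (A *v w m))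
     = (if l = m then 1 else 0)" .
qed

lemma kyfan:
  fixes A :: "complex^'n^'n" and u v :: "'i \<Rightarrow> complex^'n"
  assumes k: "1 \<le> k" "k \<le> CARD('n)" and fin: "finite I" and cI: "card I \<le> k"
    and ou: "orthonormal_on I u" and ov: "orthonormal_on I v"
  shows "Re (\<Sum>i\<in>I. cinner (A *v u i) (v i)) \<le> (\<Sum>l<k. singular_values A ! l)"
proof -
  let ?n = "CARD('n)"
  obtain w \<mu> where on: "orthonormal_on {..<?n} w"
    and ev: "\<forall>l<?n. (adjoint_mat A ** A) *v w l = of_real (\<mu> l) *s w l"
    and dec: "\<forall>i j. i \<le> j \<and> j < ?n \<longrightarrow> \<mu> j \<le> \<mu> i"
    and pos: "\<forall>l<?n. 0 \<le> \<mu> l"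
    and sv: "\<forall>l<?n. singular_values A ! l = sqrt (\<mu> l)"
    by (rule sv_decomp)
  define s where "s l = sqrt (\<mu> l)" for l
  have sv': "(\<Sum>l<k. singular_values A ! l) = (\<Sum>l<k. s l)"
    using sv k by (intro sum.cong) (auto simp: s_def)
  define c where "c i l = cinner (u i) (w l)" for i l
  define \<beta> where "\<beta> i l = cinner (A *v w l) (v i)" for i l
  have nAw: "(norm (A *v w l))^2 = \<mu> l" if l: "l < ?n" for l
    using Aw_inner[OF on ev l l] Re_cinner_self[of "A *v w l"] by simp
  have exp1: "cinner (A *v u i) (v i) = (\<Sum>l<?n. c i l * \<beta> i l)" for i
  proof -
    have "A *v u i = (\<Sum>l<?n. c i l *s (A *v w l))"
      by (subst expand[OF on, of "u i"]) (simp add: mv_sum mv_scale c_def)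
    then show ?thesis by (simp add: cinner_sum_left cinner_scale_left \<beta>_def)
  qed
  have S: "(\<Sum>i\<in>I. cinner (A *v u i) (v i)) = (\<Sum>l<?n. \<Sum>i\<in>I. c i l * \<beta> i l)"
    unfolding exp1 by (rule sum.swap)
  define a where "a l = (\<Sum>i\<in>I. (cmod (c i l))^2)" for l
  define b where "b l = (if \<mu> l > 0 then (\<Sum>i\<in>I. (cmod (\<beta> i l))^2) / \<mu> l else 0)" for l
  have bnd: "cmod (\<Sum>i\<in>I. c i l * \<beta> i l) \<le> s l * ((a l + b l) / 2)" if l: "l < ?n" for l
  proof (cases "\<mu> l > 0")
    case False
    then have m0: "\<mu> l = 0" using pos l by force
    then have "A *v w l = 0" using nAw[OF l] by simp
    then have "\<forall>i. \<beta> i l = 0" by (simp add: \<beta>_def)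
    then show ?thesis by (simp add: s_def m0)
  next
    case True
    define \<sigma> where "\<sigma> = s l"
    have \<sigma>p: "\<sigma> > 0" using True by (simp add: \<sigma>_def s_def)
    have \<sigma>2: "\<sigma> * \<sigma> = \<mu> l" using True by (simp add: \<sigma>_def s_def)
    have am: "cmod (c i l * \<beta> i l) \<le> (\<sigma> * (cmod (c i l))^2 + (cmod (\<beta> i l))^2 / \<sigma>) / 2" for i
    proof -
      have "0 \<le> (\<sigma> * cmod (c i l) - cmod (\<beta> i l))^2" by simp
      then have "2 * \<sigma> * (cmod (c i l) * cmod (\<beta> i l)) \<le> \<sigma> * (\<sigma> * (cmod (c i l))^2) + (cmod (\<beta> i l))^2"
        by (simp add: power2_eq_square algebra_simps)
      then have "cmod (c i l) * cmod (\<beta> i l) \<le> (\<sigma> * (\<sigma> * (cmod (c i l))^2) + (cmod (\<beta> i l))^2) / (2 * \<sigma>)"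
        using \<sigma>p by (simp add: field_simps)
      also have "\<dots> = (\<sigma> * (cmod (c i l))^2 + (cmod (\<beta> i l))^2 / \<sigma>) / 2"
        using \<sigma>p by (simp add: field_simps)
      finally show ?thesis by (simp add: norm_mult)
    qed
    have "cmod (\<Sum>i\<in>I. c i l * \<beta> i l) \<le> (\<Sum>i\<in>I. cmod (c i l * \<beta> i l))" by (rule norm_sum)
    also have "\<dots> \<le> (\<Sum>i\<in>I. (\<sigma> * (cmod (c i l))^2 + (cmod (\<beta> i l))^2 / \<sigma>) / 2)"
      by (rule sum_mono) (rule am)
    also have "\<dots> = (\<sigma> * a l + (\<Sum>i\<in>I. (cmod (\<beta> i l))^2) / \<sigma>) / 2"
      by (simp only: a_def sum_divide_distrib[symmetric] sum.distrib sum_distrib_left[symmetric])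
    also have "(\<Sum>i\<in>I. (cmod (\<beta> i l))^2) = \<mu> l * b l" using True by (simp add: b_def)
    also have "\<mu> l * b l / \<sigma> = \<sigma> * b l" using \<sigma>p \<sigma>2[symmetric] by simp
    finally show ?thesis by (simp add: \<sigma>_def algebra_simps)
  qed
  have a01: "0 \<le> a l \<and> a l \<le> 1" if l: "l < ?n" for l
  proof -
    have "a l = (\<Sum>i\<in>I. (cmod (cinner (w l) (u i)))^2)"
      unfolding a_def c_def by (simp add: cmod_cinner_commute)
    also have "\<dots> \<le> (norm (w l))^2" by (rule bessel[OF fin ou])
    also have "\<dots> = 1" using orthonormal_norm[OF on] l by simp
    finally show ?thesis by (simp add: a_def sum_nonneg)
  qed
  have b01: "0 \<le> b l \<and> b l \<le> 1" if l: "l < ?n" for l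
  proof (cases "\<mu> l > 0")
    case True
    have "(\<Sum>i\<in>I. (cmod (\<beta> i l))^2) \<le> (norm (A *v w l))^2"
      unfolding \<beta>_def by (rule bessel[OF fin ov])
    then have "(\<Sum>i\<in>I. (cmod (\<beta> i l))^2) \<le> \<mu> l" using nAw[OF l] by simp
    then show ?thesis using True by (simp add: b_def sum_nonneg divide_le_eq)
  qed (simp add: b_def)
  have asum: "(\<Sum>l<?n. a l) \<le> real (card I)"
  proof -
    have "(\<Sum>l<?n. a l) = (\<Sum>i\<in>I. \<Sum>l<?n. (cmod (cinner (u i) (w l)))^2)"
      unfolding a_def c_def by (rule sum.swap)
    also have "\<dots> \<le> (\<Sum>i\<in>I. 1)"
    proof (rule sum_mono)
      fix i assume i: "i \<in> I"
      have "(\<Sum>l<?n. (cmod (cinner (u i) (w l)))^2) \<le> (norm (u i))^2" by (rule bessel[OF _ on]) simp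
      then show "(\<Sum>l<?n. (cmod (cinner (u i) (w l)))^2) \<le> 1" using orthonormal_norm[OF ou i] by simp
    qed
    finally show ?thesis by simp
  qed
  have bsum: "(\<Sum>l<?n. b l) \<le> real (card I)"
  proof -
    define Lp where "Lp = {l. l < ?n \<and> 0 < \<mu> l}"
    define y where "y l = of_real (1 / sqrt (\<mu> l)) *s (A *v w l)" for l
    have oy: "orthonormal_on Lp y" unfolding Lp_def y_def by (rule orth_y[OF on ev])
    have finLp: "finite Lp" by (simp add: Lp_def)
    have bY: "b l = (\<Sum>i\<in>I. (cmod (cinner (v i) (y l)))^2)" if l: "l \<in> Lp" for l
    proof -
      have "cmod (cinner (v i) (y l)) = cmod (\<beta> i l) / sqrt (\<mu> l)" for i
        using l by (simp add: y_def cinner_scale_right norm_mult \<beta>_def cmod_cinner_commute[of "v i"] Lp_def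
            divide_inverse mult.commute norm_inverse)
      then have "(\<Sum>i\<in>I. (cmod (cinner (v i) (y l)))^2) = (\<Sum>i\<in>I. (cmod (\<beta> i l))^2 / \<mu> l)"
        using l by (simp add: power_divide Lp_def)
      then show ?thesis using l by (simp add: b_def Lp_def sum_divide_distrib)
    qed
    have "(\<Sum>l<?n. b l) = (\<Sum>l\<in>Lp. b l)"
      by (rule sum.mono_neutral_right) (auto simp: Lp_def b_def)
    also have "\<dots> = (\<Sum>l\<in>Lp. \<Sum>i\<in>I. (cmod (cinner (v i) (y l)))^2)" by (rule sum.cong) (auto simp: bY)
    also have "\<dots> = (\<Sum>i\<in>I. \<Sum>l\<in>Lp. (cmod (cinner (v i) (y l)))^2)" by (rule sum.swap)
    also have "\<dots> \<le> (\<Sum>i\<in>I. 1)"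
    proof (rule sum_mono)
      fix i assume i: "i \<in> I"
      have "(\<Sum>l\<in>Lp. (cmod (cinner (v i) (y l)))^2) \<le> (norm (v i))^2" by (rule bessel[OF finLp oy])
      then show "(\<Sum>l\<in>Lp. (cmod (cinner (v i) (y l)))^2) \<le> 1" using orthonormal_norm[OF ov i] by simp
    qed
    finally show ?thesis by simp
  qed
  define t where "t l = (a l + b l) / 2" for l
  have t01: "0 \<le> t l \<and> t l \<le> 1" if l: "l < ?n" for l
  proof -
    have h: "0 \<le> a l" "a l \<le> 1" "0 \<le> b l" "b l \<le> 1" using a01[OF l] b01[OF l] by auto
    have "0 \<le> a l + b l" "a l + b l \<le> 2" using h by linarith+
    then show ?thesis unfolding t_def by (intro conjI; simp add: field_simps)
  qed
  have "Re (\<Sum>i\<in>I. cinner (A *v u i) (v i)) \<le> cmod (\<Sum>i\<in>I. cinner (A *v u i) (v i))"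
    by (rule complex_Re_le_cmod)
  also have "\<dots> = cmod (\<Sum>l<?n. \<Sum>i\<in>I. c i l * \<beta> i l)" by (simp add: S)
  also have "\<dots> \<le> (\<Sum>l<?n. cmod (\<Sum>i\<in>I. c i l * \<beta> i l))" by (rule norm_sum)
  also have "\<dots> \<le> (\<Sum>l<?n. s l * t l)" unfolding t_def by (rule sum_mono) (rule bnd, simp)
  also have "\<dots> \<le> (\<Sum>l<k. s l)"
  proof (rule rearr[OF k])
    show "\<forall>i j. i \<le> j \<and> j < ?n \<longrightarrow> s j \<le> s i" using dec by (simp add: s_def)
    show "\<forall>l<?n. 0 \<le> s l" using pos by (simp add: s_def)
    show "\<forall>l<?n. 0 \<le> t l \<and> t l \<le> 1" using t01 by blast
    have "(\<Sum>l<?n. t l) = ((\<Sum>l<?n. a l) + (\<Sum>l<?n. b l)) / 2"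
      by (simp only: t_def sum_divide_distrib[symmetric] sum.distrib)
    then show "(\<Sum>l<?n. t l) \<le> real k" using asum bsum cI by simp
  qed
  finally show ?thesis using sv' by simp
qed

lemma kyfan_attain:
  fixes A :: "complex^'n^'n"
  assumes k: "1 \<le> k" "k \<le> CARD('n)"
  obtains I u v where "finite (I :: nat set)" "card I \<le> k" "orthonormal_on I (u :: nat \<Rightarrow> complex^'n)" "orthonormal_on I (v :: nat \<Rightarrow> complex^'n)"
    "Re (\<Sum>i\<in>I. cinner (A *v u i) (v i)) = (\<Sum>l<k. singular_values A ! l)"
proof -
  let ?n = "CARD('n)"
  obtain w \<mu> where on: "orthonormal_on {..<?n} w"
    and ev: "\<forall>l<?n. (adjoint_mat A ** A) *v w l = of_real (\<mu> l) *s w l"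
    and pos: "\<forall>l<?n. 0 \<le> \<mu> l"
    and sv: "\<forall>l<?n. singular_values A ! l = sqrt (\<mu> l)"
    by (rule sv_decomp)
  define I where "I = {l. l < k \<and> 0 < \<mu> l}"
  define v where "v l = of_real (1 / sqrt (\<mu> l)) *s (A *v w l)" for l
  have finI: "finite I" by (simp add: I_def)
  have cI: "card I \<le> k"
  proof -
    have "I \<subseteq> {..<k}" by (auto simp: I_def)
    then show ?thesis using card_mono[of "{..<k}" I] by simp
  qed
  have sub: "I \<subseteq> {l. l < ?n \<and> 0 < \<mu> l}" using k by (auto simp: I_def)
  have ou: "orthonormal_on I w" by (rule orthonormal_on_subset[OF on]) (use sub in auto)
  have ov: "orthonormal_on I v" unfolding v_def by (rule orthonormal_on_subset[OF orth_y[OF on ev] sub])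
  have trm: "cinner (A *v w i) (v i) = of_real (sqrt (\<mu> i))" if i: "i \<in> I" for i
  proof -
    have ip: "0 < \<mu> i" "i < ?n" using i k by (auto simp: I_def)
    have "cinner (A *v w i) (v i) = of_real (1 / sqrt (\<mu> i)) * of_real (\<mu> i)"
      using Aw_inner[OF on ev ip(2) ip(2)] by (simp add: v_def cinner_scale_right)
    also have "\<dots> = of_real (1 / sqrt (\<mu> i) * \<mu> i)" by (simp only: of_real_mult)
    also have "1 / sqrt (\<mu> i) * \<mu> i = sqrt (\<mu> i)"
      using ip real_div_sqrt[of "\<mu> i"] by simp
    finally show ?thesis .
  qed
  have "(\<Sum>i\<in>I. cinner (A *v w i) (v i)) = (\<Sum>i\<in>I. of_real (sqrt (\<mu> i)))"
    by (rule sum.cong) (simp_all add: trm)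
  then have "Re (\<Sum>i\<in>I. cinner (A *v w i) (v i)) = (\<Sum>i\<in>I. sqrt (\<mu> i))"
    by simp
  also have "\<dots> = (\<Sum>l<k. sqrt (\<mu> l))"
  proof (rule sum.mono_neutral_left)
    show "\<forall>i\<in>{..<k} - I. sqrt (\<mu> i) = 0"
    proof
      fix i assume i: "i \<in> {..<k} - I"
      then have i1: "i < ?n" and i2: "\<not> 0 < \<mu> i" using k by (auto simp: I_def)
      have "0 \<le> \<mu> i" using pos i1 by blast
      then have "\<mu> i = 0" using i2 by linarith
      then show "sqrt (\<mu> i) = 0" by simp
    qed
  qed (auto simp: I_def)
  also have "\<dots> = (\<Sum>l<k. singular_values A ! l)" using sv k by (intro sum.cong) auto
  finally have "Re (\<Sum>i\<in>I. cinner (A *v w i) (v i)) = (\<Sum>l<k. singular_values A ! l)" .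
  then show ?thesis by (rule that[OF finI cI ou ov])
qed

lemma max_principle_sum:
  fixes F :: "complex \<Rightarrow> complex^'n^'n"
  assumes k: "1 \<le> k" "k \<le> CARD('n)" and op: "open \<Omega>" and co: "connected \<Omega>"
    and an: "\<And>i j. (\<lambda>z. F z $ i $ j) analytic_on \<Omega>"
    and z0: "z0 \<in> \<Omega>"
    and mx: "\<forall>z\<in>\<Omega>. (\<Sum>l<k. singular_values (F z) ! l) \<le> (\<Sum>l<k. singular_values (F z0) ! l)"
  shows "\<forall>z\<in>\<Omega>. (\<Sum>l<k. singular_values (F z) ! l) = (\<Sum>l<k. singular_values (F z0) ! l)"
proof -
  define G where "G z = (\<Sum>l<k. singular_values (F z) ! l)" for z
  obtain I u v where finI: "finite (I :: nat set)" and cI: "card I \<le> k"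
    and ou: "orthonormal_on I (u :: nat \<Rightarrow> complex^'n)" and ov: "orthonormal_on I (v :: nat \<Rightarrow> complex^'n)"
    and eq: "Re (\<Sum>i\<in>I. cinner (F z0 *v u i) (v i)) = G z0"
    unfolding G_def by (rule kyfan_attain[OF k, of "F z0"])
  define \<phi> where "\<phi> z = (\<Sum>i\<in>I. cinner (F z *v u i) (v i))" for z
  have "\<phi> analytic_on \<Omega>"
    unfolding \<phi>_def cinner_def mv_comp by (intro analytic_intros an)
  then have hol: "\<phi> holomorphic_on \<Omega>" by (rule analytic_imp_holomorphic)
  have le: "Re (\<phi> z) \<le> G z" for z
    unfolding \<phi>_def G_def by (rule kyfan[OF k finI cI ou ov])
  have le0: "Re (\<phi> z) \<le> Re (\<phi> z0)" if z: "z \<in> \<Omega>" for z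
    using le[of z] mx z eq unfolding G_def \<phi>_def by auto
  have const: "\<phi> constant_on \<Omega>"
  proof (rule ccontr)
    assume nc: "\<not> \<phi> constant_on \<Omega>"
    have "open (\<phi> ` \<Omega>)" by (rule open_mapping_thm[OF hol op co op order_refl nc])
    moreover have "\<phi> z0 \<in> \<phi> ` \<Omega>" using z0 by blast
    ultimately obtain e where e: "e > 0" "ball (\<phi> z0) e \<subseteq> \<phi> ` \<Omega>"
      using open_contains_ball by blast
    have "dist (\<phi> z0) (\<phi> z0 + of_real (e / 2)) = e / 2" using e(1) by (simp add: dist_norm)
    then have "\<phi> z0 + of_real (e / 2) \<in> ball (\<phi> z0) e" using e(1) by simp
    then have "\<phi> z0 + of_real (e / 2) \<in> \<phi> ` \<Omega>" by (rule subsetD[OF e(2)])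
    then obtain z where z0': "\<phi> z0 + of_real (e / 2) = \<phi> z" and z1: "z \<in> \<Omega>" by (rule imageE)
    then have z: "z \<in> \<Omega>" "\<phi> z = \<phi> z0 + of_real (e / 2)" by simp_all
    have "Re (\<phi> z) = Re (\<phi> z0) + e / 2" using z by simp
    then show False using le0[OF z(1)] e by simp
  qed
  then obtain c where c: "\<forall>z\<in>\<Omega>. \<phi> z = c" unfolding constant_on_def by blast
  show ?thesis
  proof
    fix z assume z: "z \<in> \<Omega>"
    have "\<phi> z = \<phi> z0" using c z z0 by simp
    then have "G z0 \<le> G z" using le[of z] eq unfolding \<phi>_def by simp
    moreover have "G z \<le> G z0" using mx z unfolding G_def by blast
    ultimately show "(\<Sum>l<k. singular_values (F z) ! l) = (\<Sum>l<k. singular_values (F z0) ! l)"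
      unfolding G_def by simp
  qed
qed

theorem corollary7:
  fixes F :: "complex \<Rightarrow> complex^'n^'n" and \<Omega> :: "complex set" and m :: nat
  assumes "1 \<le> m" and "m \<le> CARD('n)"
    and "open \<Omega>" and "connected \<Omega>" and "\<Omega> \<noteq> {}"
    and "\<And>i j. (\<lambda>z. F z $ i $ j) analytic_on \<Omega>"
    and "\<And>k. k \<in> {1..m} \<Longrightarrow> \<exists>z0\<in>\<Omega>. \<forall>z\<in>\<Omega>. sval k (F z) \<le> sval k (F z0)"
  shows "\<forall>k\<in>{1..m}. \<exists>c. \<forall>z\<in>\<Omega>. sval k (F z) = c"
proof -
  note mn = assms(2) and op = assms(3) and co = assms(4) and an = assms(6) and att = assms(7)
  obtain p where p: "p \<in> \<Omega>" using assms(5) by blast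
  have main: "k \<le> m \<Longrightarrow> \<forall>j. 1 \<le> j \<and> j \<le> k \<longrightarrow> (\<forall>z\<in>\<Omega>. sval j (F z) = sval j (F p))" for k
  proof (induction k)
    case 0 then show ?case by simp
  next
    case (Suc k)
    then have IH: "\<forall>j. 1 \<le> j \<and> j \<le> k \<longrightarrow> (\<forall>z\<in>\<Omega>. sval j (F z) = sval j (F p))" by simp
    have km: "Suc k \<le> m" by fact
    obtain z0 where z0: "z0 \<in> \<Omega>" and z0m: "\<forall>z\<in>\<Omega>. sval (Suc k) (F z) \<le> sval (Suc k) (F z0)"
      using att[of "Suc k"] km by auto
    have pre: "(\<Sum>l<k. singular_values (F z) ! l) = (\<Sum>l<k. singular_values (F p) ! l)" if z: "z \<in> \<Omega>" for z
    proof (rule sum.cong)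
      fix l assume l: "l \<in> {..<k}"
      have "sval (Suc l) (F z) = sval (Suc l) (F p)" using IH l z by auto
      then show "singular_values (F z) ! l = singular_values (F p) ! l" by (simp add: sval_def)
    qed simp
    have Gs: "(\<Sum>l<Suc k. singular_values (F z) ! l) = (\<Sum>l<k. singular_values (F p) ! l) + sval (Suc k) (F z)"
      if z: "z \<in> \<Omega>" for z
      using pre[OF z] by (simp add: sval_def)
    have k1: "1 \<le> Suc k" by simp
    have k2: "Suc k \<le> CARD('n)" using km mn by simp
    have mxx: "\<forall>z\<in>\<Omega>. (\<Sum>l<Suc k. singular_values (F z) ! l) \<le> (\<Sum>l<Suc k. singular_values (F z0) ! l)"
    proof
      fix z assume z: "z \<in> \<Omega>"
      have "sval (Suc k) (F z) \<le> sval (Suc k) (F z0)" using z0m z by blast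
      then show "(\<Sum>l<Suc k. singular_values (F z) ! l) \<le> (\<Sum>l<Suc k. singular_values (F z0) ! l)"
        unfolding Gs[OF z] Gs[OF z0] by linarith
    qed
    have eqs: "\<forall>z\<in>\<Omega>. (\<Sum>l<Suc k. singular_values (F z) ! l) = (\<Sum>l<Suc k. singular_values (F z0) ! l)"
      by (rule max_principle_sum[OF k1 k2 op co an z0 mxx])
    have sk: "\<forall>z\<in>\<Omega>. sval (Suc k) (F z) = sval (Suc k) (F z0)"
    proof
      fix z assume z: "z \<in> \<Omega>"
      have "(\<Sum>l<Suc k. singular_values (F z) ! l) = (\<Sum>l<Suc k. singular_values (F z0) ! l)"
        using eqs z by blast
      then show "sval (Suc k) (F z) = sval (Suc k) (F z0)"
        unfolding Gs[OF z] Gs[OF z0] by linarith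
    qed
    show ?case
    proof (intro allI impI)
      fix j assume j: "1 \<le> j \<and> j \<le> Suc k"
      show "\<forall>z\<in>\<Omega>. sval j (F z) = sval j (F p)"
      proof (cases "j = Suc k")
        case True then show ?thesis using sk p by simp
      next
        case False then show ?thesis using IH j by simp
      qed
    qed
  qed
  show ?thesis
  proof
    fix k assume k: "k \<in> {1..m}"
    then have "\<forall>z\<in>\<Omega>. sval k (F z) = sval k (F p)" using main[of m] by simp
    then show "\<exists>c. \<forall>z\<in>\<Omega>. sval k (F z) = c" by blast
  qed
qed

end
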